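(* Let $F\colon V(a,b,r_1,r_2,n)\to W$ belong to $D_{\beta,p}$ with $\beta>1$ and $p\ge1$. Then there exist $r_1',r_2'>0$ such that $V(a,b,r_1',r_2',n)\subset F(V(a,b,r_1,r_2,n))$, and the restriction of $F^{-1}$ to $V(a,b,r_1',r_2',n)$ belongs to $D_{\beta,p}$.
   Context: $V(a,b,r_1,r_2,n)=\{(x,y)\in\mathbb{C}^*\times\mathbb{C}^n:a<\arg x<b,|x|<r_1,|y|<r_2\}$ for $-\pi\le a<b\le\pi$ (with no argument condition when $(a,b)=(-\pi,\pi)$). A $C^\infty$ map $f$ on such a set is of order $(\alpha,p)$ if for each $0\le k\le p$ and each partial derivative $g$ of order $k$ (real coordinates), $|x|^{k-\alpha}g(x,y)$ is bounded on the intersection of the domain with some neighborhood of the origin of $\mathbb{C}^{n+1}$. A $C^\infty$ diffeomorphism $F\colon V(a,b,r_1,r_2,n)\to W$ onto an open set $W\subset\mathbb{C}^{n+1}$ belongs to $D_{\beta,p}$ ($\beta>1$) if $x\circ F\equiv x$ and $F-\mathrm{id}$ is of order $(\beta,p)$. *)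

theory Defs
  imports "HOL-Analysis.Analysis"
begin

text \<open>Points of C x C^n are pairs (x, y) with x :: complex and y :: complex ^ 'n.
  Real coordinates are given by the Basis of this euclidean space.\<close>

type_synonym 'n pt = "complex \<times> (complex ^ 'n)"

definition Vdom :: "real \<Rightarrow> real \<Rightarrow> real \<Rightarrow> real \<Rightarrow> 'n::finite pt set" where
  "Vdom a b r1 r2 = {(x, y). x \<noteq> 0 \<and>
      (if a = - pi \<and> b = pi then True else a < Arg x \<and> Arg x < b) \<and>
      norm x < r1 \<and> norm y < r2}"

fun partials :: "nat \<Rightarrow> ('a::euclidean_space \<Rightarrow> 'b::real_normed_vector) \<Rightarrow> ('a \<Rightarrow> 'b) set" where
  "partials 0 f = {f}"
| "partials (Suc k) f =
     {(\<lambda>z. frechet_derivative g (at z) i) | g i. g \<in> partials k f \<and> i \<in> Basis}"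

definition smooth_on :: "'a::euclidean_space set \<Rightarrow> ('a \<Rightarrow> 'b::real_normed_vector) \<Rightarrow> bool" where
  "smooth_on S f \<longleftrightarrow> (\<forall>k. \<forall>g \<in> partials k f. g differentiable_on S)"

definition of_order :: "'n::finite pt set \<Rightarrow> real \<Rightarrow> nat \<Rightarrow> ('n pt \<Rightarrow> 'n pt) \<Rightarrow> bool" where
  "of_order D \<alpha> p f \<longleftrightarrow> smooth_on D f \<and>
     (\<forall>k \<le> p. \<forall>g \<in> partials k f. \<exists>\<delta> > 0. \<exists>C. \<forall>z \<in> D.
        norm z < \<delta> \<longrightarrow> norm (fst z) powr (real k - \<alpha>) * norm (g z) \<le> C)"

definition smooth_diffeo :: "'a::euclidean_space set \<Rightarrow> 'a set \<Rightarrow> ('a \<Rightarrow> 'a) \<Rightarrow> bool" where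
  "smooth_diffeo D W F \<longleftrightarrow> open W \<and> F ` D = W \<and> inj_on F D \<and>
     smooth_on D F \<and> smooth_on W (inv_into D F)"

definition D_class :: "real \<Rightarrow> nat \<Rightarrow> 'n::finite pt set \<Rightarrow> ('n pt \<Rightarrow> 'n pt) \<Rightarrow> bool" where
  "D_class \<beta> p D F \<longleftrightarrow> (\<exists>W. smooth_diffeo D W F) \<and>
     (\<forall>z \<in> D. fst (F z) = fst z) \<and> of_order D \<beta> p (\<lambda>z. F z - z)"

end

theory Submission
  imports Defs
begin


definition pd :: "('a::euclidean_space \<Rightarrow> 'b::real_normed_vector) \<Rightarrow> 'a \<Rightarrow> 'a \<Rightarrow> 'b" where
  "pd f i = (\<lambda>z. frechet_derivative f (at z) i)"

definition bnd :: "'n::finite pt set \<Rightarrow> real \<Rightarrow> ('n pt \<Rightarrow> 'b::real_normed_vector) \<Rightarrow> bool" where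
  "bnd U m g \<longleftrightarrow> (\<exists>\<delta>>0. \<exists>C. \<forall>z\<in>U. norm z < \<delta> \<longrightarrow> norm (fst z) powr (- m) * norm (g z) \<le> C)"

fun Wb :: "bool \<Rightarrow> 'n::finite pt set \<Rightarrow> real \<Rightarrow> nat \<Rightarrow> ('n pt \<Rightarrow> 'b::real_normed_vector) \<Rightarrow> bool" where
  "Wb b U m 0 f \<longleftrightarrow> f differentiable_on U \<and> (b \<longrightarrow> bnd U m f)"
| "Wb b U m (Suc q) f \<longleftrightarrow> f differentiable_on U \<and> (b \<longrightarrow> bnd U m f) \<and> (\<forall>i\<in>Basis. Wb b U (m-1) q (pd f i))"

lemma partials_Suc': "partials (Suc k) f = (\<Union>i\<in>Basis. partials k (pd f i))"
proof (induction k)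
  case 0 then show ?case by (auto simp: pd_def)
next
  case (Suc k)
  have "partials (Suc (Suc k)) f = {(\<lambda>z. frechet_derivative g (at z) i) | g i. g \<in> partials (Suc k) f \<and> i \<in> Basis}"
    by simp
  also have "\<dots> = (\<Union>j\<in>Basis. partials (Suc k) (pd f j))"
    unfolding Suc by auto
  finally show ?case .
qed

lemma Wb_iff: "Wb b U m q f \<longleftrightarrow> (\<forall>k\<le>q. \<forall>g\<in>partials k f. g differentiable_on U \<and> (b \<longrightarrow> bnd U (m - real k) g))"
proof (induction q arbitrary: m f)
  case 0 then show ?case by simp
next
  case (Suc q)
  show ?case
  proof
    assume H: "Wb b U m (Suc q) f"
    show "\<forall>k\<le>Suc q. \<forall>g\<in>partials k f. g differentiable_on U \<and> (b \<longrightarrow> bnd U (m - real k) g)"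
    proof (intro allI impI ballI)
      fix k g assume k: "k \<le> Suc q" and g: "g \<in> partials k f"
      show "g differentiable_on U \<and> (b \<longrightarrow> bnd U (m - real k) g)"
      proof (cases k)
        case 0 then show ?thesis using H g by auto
      next
        case (Suc k')
        then obtain i where i: "i \<in> Basis" "g \<in> partials k' (pd f i)" using g partials_Suc' by blast
        have "Wb b U (m-1) q (pd f i)" using H i by auto
        then have "g differentiable_on U \<and> (b \<longrightarrow> bnd U (m - 1 - real k') g)"
          using Suc.IH k Suc i by auto
        then show ?thesis using Suc by (simp add: algebra_simps)
      qed
    qed
  next
    assume H: "\<forall>k\<le>Suc q. \<forall>g\<in>partials k f. g differentiable_on U \<and> (b \<longrightarrow> bnd U (m - real k) g)"
    have "f differentiable_on U \<and> (b \<longrightarrow> bnd U m f)" using H[rule_format, of 0 f] by simp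
    moreover have "Wb b U (m-1) q (pd f i)" if i: "i \<in> Basis" for i
    proof -
      have "\<forall>k\<le>q. \<forall>g\<in>partials k (pd f i). g differentiable_on U \<and> (b \<longrightarrow> bnd U (m - 1 - real k) g)"
      proof (intro allI impI ballI)
        fix k g assume "k \<le> q" "g \<in> partials k (pd f i)"
        moreover have "g \<in> partials (Suc k) f" unfolding partials_Suc' using i \<open>g \<in> partials k (pd f i)\<close> by blast
        ultimately have "Suc k \<le> Suc q" "g \<in> partials (Suc k) f" by auto
        then show "g differentiable_on U \<and> (b \<longrightarrow> bnd U (m - 1 - real k) g)"
          using H by (fastforce simp: algebra_simps)
      qed
      then show ?thesis using Suc.IH by blast
    qed
    ultimately show "Wb b U m (Suc q) f" by simp
  qed
qed

lemma smooth_iff: "smooth_on U f \<longleftrightarrow> (\<forall>q. Wb False U m q f)"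
  unfolding smooth_on_def Wb_iff by blast

lemma of_order_iff: "of_order D \<alpha> p f \<longleftrightarrow> smooth_on D f \<and> Wb True D \<alpha> p f"
  unfolding of_order_def Wb_iff bnd_def by (auto simp: smooth_on_def minus_diff_eq)

lemma diff_on_cong:
  assumes "open U" "\<And>z. z \<in> U \<Longrightarrow> f z = g z" "f differentiable_on U"
  shows "g differentiable_on U"
  using assms unfolding differentiable_on_eq_differentiable_at[OF assms(1)] differentiable_def
  by (meson has_derivative_transform_within_open)

lemma pd_cong:
  assumes "open U" "\<And>z. z \<in> U \<Longrightarrow> f z = g z" "f differentiable_on U" "z \<in> U"
  shows "pd f i z = pd g i z"
  unfolding pd_def
  using assms frechet_derivative_transform_within_open[of f z U g]
  by (simp add: differentiable_on_eq_differentiable_at)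

lemma bnd_cong: "(\<And>z. z \<in> U \<Longrightarrow> f z = g z) \<Longrightarrow> bnd U m f \<Longrightarrow> bnd U m g"
  unfolding bnd_def by metis

lemma Wb_cong:
  assumes "open U" "\<And>z. z \<in> U \<Longrightarrow> f z = g z" "Wb b U m q f"
  shows "Wb b U m q g"
  using assms(2,3)
proof (induction q arbitrary: m f g)
  case 0 then show ?case using diff_on_cong[OF assms(1)] bnd_cong by (metis Wb.simps(1))
next
  case (Suc q)
  have d: "f differentiable_on U" using Suc by simp
  have "Wb b U (m-1) q (pd g i)" if "i \<in> Basis" for i
    using Suc.IH[of "pd f i" "pd g i"] pd_cong[OF assms(1) Suc.prems(1) d] Suc.prems that by auto
  then show ?case using diff_on_cong[OF assms(1) Suc.prems(1)] bnd_cong[OF Suc.prems(1)] Suc.prems(2) by auto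
qed

lemma WbI_Suc:
  assumes "open U" "f differentiable_on U" "b \<Longrightarrow> bnd U m f"
    "\<And>i. i\<in>Basis \<Longrightarrow> \<exists>h. (\<forall>z\<in>U. pd f i z = h z) \<and> Wb b U (m-1) q h"
  shows "Wb b U m (Suc q) f"
  using assms Wb_cong[OF assms(1)] by (metis Wb.simps(2))

lemma Wb_diff_on: "Wb b U m q f \<Longrightarrow> f differentiable_on U"
  by (cases q) auto

lemma Wb_bnd: "Wb True U m q f \<Longrightarrow> bnd U m f"
  by (cases q) auto

lemma Wb_pd: "Wb b U m (Suc q) f \<Longrightarrow> i \<in> Basis \<Longrightarrow> Wb b U (m-1) q (pd f i)"
  by auto

lemma Wb_mono_q:
  assumes "q' \<le> q" "Wb b U m q f" shows "Wb b U m q' f"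
  unfolding Wb_iff
proof (intro allI impI ballI)
  fix k g assume "k \<le> q'" "g \<in> partials k f"
  then show "g differentiable_on U \<and> (b \<longrightarrow> bnd U (m - real k) g)"
    using assms unfolding Wb_iff by (meson le_trans)
qed

lemma norm_fst_le': "norm (fst z) \<le> norm z"
  using norm_fst_le[of "fst z" "snd z"] by simp

lemma norm_snd_le': "norm (snd z) \<le> norm z"
  by (metis norm_snd_le prod.collapse)

lemma bnd_mono:
  assumes "m' \<le> m" "bnd U m f"
  shows "bnd U m' f"
proof -
  obtain \<delta> C where d: "\<delta> > 0" and C: "\<forall>z\<in>U. norm z < \<delta> \<longrightarrow> norm (fst z) powr (- m) * norm (f z) \<le> C"
    using assms(2) unfolding bnd_def by blast
  have "\<forall>z\<in>U. norm z < min \<delta> 1 \<longrightarrow> norm (fst z) powr (- m') * norm (f z) \<le> max C 0"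
  proof (intro ballI impI)
    fix z assume z: "z \<in> U" "norm z < min \<delta> 1"
    have x1: "norm (fst z) < 1" using z norm_fst_le'[of z] by linarith
    show "norm (fst z) powr (- m') * norm (f z) \<le> max C 0"
    proof (cases "fst z = 0")
      case True then show ?thesis by simp
    next
      case False
      have "norm (fst z) powr (- m') = norm (fst z) powr (m - m') * norm (fst z) powr (- m)"
        by (simp add: powr_add[symmetric])
      also have "norm (fst z) powr (m - m') \<le> 1"
        using x1 assms(1) False by (simp add: powr_le1)
      ultimately have "norm (fst z) powr (- m') * norm (f z) \<le> norm (fst z) powr (- m) * norm (f z)"
        by (simp add: mult.assoc mult_left_le_one_le)
      then show ?thesis using C z by force
    qed
  qed
  then show ?thesis unfolding bnd_def using d by (intro exI[of _ "min \<delta> 1"]) auto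
qed

lemma Wb_mono_m: "m' \<le> m \<Longrightarrow> Wb b U m q f \<Longrightarrow> Wb b U m' q f"
  unfolding Wb_iff using bnd_mono by (smt (verit) diff_right_mono)



lemma bnd_intro:
  assumes "\<delta> > 0" "0 \<le> C"
    "\<And>z. z \<in> U \<Longrightarrow> norm z < \<delta> \<Longrightarrow> fst z \<noteq> 0 \<Longrightarrow> norm (fst z) powr (- m) * norm (f z) \<le> C"
  shows "bnd U m f"
proof -
  have "\<forall>z\<in>U. norm z < \<delta> \<longrightarrow> norm (fst z) powr (- m) * norm (f z) \<le> C"
  proof (intro ballI impI)
    fix z assume "z \<in> U" "norm z < \<delta>"
    then show "norm (fst z) powr (- m) * norm (f z) \<le> C"
      using assms by (cases "fst z = 0") auto
  qed
  then show ?thesis unfolding bnd_def using assms(1) by blast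
qed

lemma bnd_elim:
  assumes "bnd U m f"
  obtains \<delta> C where "\<delta> > 0" "0 \<le> C"
    "\<And>z. z \<in> U \<Longrightarrow> norm z < \<delta> \<Longrightarrow> norm (fst z) powr (- m) * norm (f z) \<le> C"
proof -
  obtain \<delta> C where "\<delta> > 0" "\<forall>z\<in>U. norm z < \<delta> \<longrightarrow> norm (fst z) powr (- m) * norm (f z) \<le> C"
    using assms unfolding bnd_def by blast
  then show ?thesis using that[of \<delta> "max C 0"] by force
qed

lemma pd_at: "(f has_derivative f') (at z) \<Longrightarrow> pd f i z = f' i"
  unfolding pd_def using frechet_derivative_at by metis

lemma diff_at: "open U \<Longrightarrow> f differentiable_on U \<Longrightarrow> z \<in> U \<Longrightarrow> (f has_derivative frechet_derivative f (at z)) (at z)"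
  using differentiable_on_eq_differentiable_at frechet_derivative_works by blast

lemma Wb_zero: "open U \<Longrightarrow> Wb b U m q (\<lambda>z. 0)"
proof (induction q arbitrary: m)
  case 0 then show ?case by (simp add: bnd_def) (use zero_less_one in blast)
next
  case (Suc q)
  show ?case
    by (rule WbI_Suc[OF Suc.prems]) (auto simp: bnd_def pd_def intro: Suc.IH[OF Suc.prems] exI[of _ 1])
qed

lemma bnd_bounded:
  assumes "m \<le> 0" "\<delta> > 0" "\<And>z. z \<in> U \<Longrightarrow> norm z < \<delta> \<Longrightarrow> norm (f z) \<le> K"
  shows "bnd U m f"
proof (rule bnd_intro[of "min \<delta> 1" "max K 0"])
  fix z assume z: "z \<in> U" "norm z < min \<delta> 1" "fst z \<noteq> 0"
  have x1: "norm (fst z) < 1" using z norm_fst_le'[of z] by linarith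
  have "norm (fst z) powr (- m) \<le> 1" using x1 assms(1) by (simp add: powr_le1)
  moreover have "norm (f z) \<le> max K 0" using assms(3)[of z] z by force
  ultimately show "norm (fst z) powr (- m) * norm (f z) \<le> max K 0"
    by (meson mult_le_one norm_ge_zero order.trans mult_left_le_one_le powr_ge_zero)
qed (use assms in auto)

lemma Wb_const: "open U \<Longrightarrow> m \<le> 0 \<Longrightarrow> Wb b U m q (\<lambda>z. c)"
proof (cases q)
  case 0
  assume "open U" "m \<le> 0"
  then show ?thesis using 0 bnd_bounded[of m 1 U "\<lambda>z. c" "norm c"] by auto
next
  case (Suc q')
  assume U: "open U" and m: "m \<le> 0"
  show ?thesis unfolding Suc
    by (rule WbI_Suc[OF U]) (use bnd_bounded[of m 1 U "\<lambda>z. c" "norm c"] m Wb_zero[OF U] in \<open>auto simp: pd_def intro!: exI[of _ "\<lambda>z. 0"]\<close>)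
qed

lemma bnd_add:
  assumes "bnd U m f" "bnd U m g" shows "bnd U m (\<lambda>z. f z + g z)"
proof -
  obtain d1 C1 where 1: "d1 > 0" "0 \<le> C1" "\<And>z. z \<in> U \<Longrightarrow> norm z < d1 \<Longrightarrow> norm (fst z) powr (- m) * norm (f z) \<le> C1"
    using assms(1) by (rule bnd_elim) blast
  obtain d2 C2 where 2: "d2 > 0" "0 \<le> C2" "\<And>z. z \<in> U \<Longrightarrow> norm z < d2 \<Longrightarrow> norm (fst z) powr (- m) * norm (g z) \<le> C2"
    using assms(2) by (rule bnd_elim) blast
  show ?thesis
  proof (rule bnd_intro[of "min d1 d2" "C1 + C2"])
    fix z assume z: "z \<in> U" "norm z < min d1 d2"
    have "norm (fst z) powr (- m) * norm (f z + g z) \<le> norm (fst z) powr (- m) * norm (f z) + norm (fst z) powr (- m) * norm (g z)"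
      by (metis distrib_left mult_left_mono norm_triangle_ineq powr_ge_zero)
    also have "\<dots> \<le> C1 + C2" using 1(3)[of z] 2(3)[of z] z by auto
    finally show "norm (fst z) powr (- m) * norm (f z + g z) \<le> C1 + C2" .
  qed (use 1 2 in auto)
qed

lemma Wb_add:
  fixes f g :: "'n::finite pt \<Rightarrow> 'b::real_normed_vector"
  assumes U: "open U"
  shows "Wb b U m q f \<Longrightarrow> Wb b U m q g \<Longrightarrow> Wb b U m q (\<lambda>z. f z + g z)"
proof (induction q arbitrary: m f g)
  case 0 then show ?case using bnd_add by (auto intro: differentiable_on_add)
next
  case (Suc q)
  have df: "f differentiable_on U" and dg: "g differentiable_on U" using Suc.prems by auto
  show ?case
  proof (rule WbI_Suc[OF U])
    show "(\<lambda>z. f z + g z) differentiable_on U" using df dg by (rule differentiable_on_add)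
    show "b \<Longrightarrow> bnd U m (\<lambda>z. f z + g z)" using Suc.prems bnd_add by auto
    fix i :: "'n pt" assume i: "i \<in> Basis"
    have "\<forall>z\<in>U. pd (\<lambda>z. f z + g z) i z = pd f i z + pd g i z"
      using pd_at[OF has_derivative_add[OF diff_at[OF U df] diff_at[OF U dg]]] by (simp add: pd_def)
    moreover have "Wb b U (m-1) q (\<lambda>z. pd f i z + pd g i z)"
      using Suc.IH Suc.prems i by auto
    ultimately show "\<exists>h. (\<forall>z\<in>U. pd (\<lambda>z. f z + g z) i z = h z) \<and> Wb b U (m - 1) q h"
      by (intro exI[of _ "\<lambda>z. pd f i z + pd g i z"]) auto
  qed
qed

lemma bnd_linear:
  assumes L: "bounded_linear L" and "bnd U m f" shows "bnd U m (\<lambda>z. L (f z))"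
proof -
  obtain K where K: "K > 0" "\<And>x. norm (L x) \<le> norm x * K" using bounded_linear.pos_bounded[OF L] by blast
  obtain d1 C1 where 1: "d1 > 0" "0 \<le> C1" "\<And>z. z \<in> U \<Longrightarrow> norm z < d1 \<Longrightarrow> norm (fst z) powr (- m) * norm (f z) \<le> C1"
    using assms(2) by (rule bnd_elim) blast
  show ?thesis
  proof (rule bnd_intro[of d1 "C1 * K"])
    fix z assume z: "z \<in> U" "norm z < d1"
    have "norm (fst z) powr (- m) * norm (L (f z)) \<le> norm (fst z) powr (- m) * (norm (f z) * K)"
      using K by (simp add: mult_left_mono)
    also have "\<dots> \<le> C1 * K" using 1(3)[OF z] K by (simp add: mult.assoc[symmetric])
    finally show "norm (fst z) powr (- m) * norm (L (f z)) \<le> C1 * K" .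
  qed (use 1 K in auto)
qed

lemma diff_onI: "open U \<Longrightarrow> (\<And>z. z \<in> U \<Longrightarrow> f differentiable at z) \<Longrightarrow> f differentiable_on U"
  using differentiable_on_eq_differentiable_at by blast

lemma Wb_linear:
  fixes f :: "'n::finite pt \<Rightarrow> 'b::real_normed_vector" and L :: "'b \<Rightarrow> 'c::real_normed_vector"
  assumes U: "open U" and L: "bounded_linear L"
  shows "Wb b U m q f \<Longrightarrow> Wb b U m q (\<lambda>z. L (f z))"
proof (induction q arbitrary: m f)
  case 0
  have "f differentiable_on U" using 0 by auto
  then have "(\<lambda>z. L (f z)) differentiable_on U"
    using bounded_linear.has_derivative[OF L diff_at[OF U]] by (intro diff_onI[OF U] differentiableI) blast
  then show ?case using bnd_linear[OF L] 0 by auto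
next
  case (Suc q)
  have df: "f differentiable_on U" using Suc.prems by auto
  show ?case
  proof (rule WbI_Suc[OF U])
    show "(\<lambda>z. L (f z)) differentiable_on U"
      using bounded_linear.has_derivative[OF L diff_at[OF U df]] by (intro diff_onI[OF U] differentiableI) blast
    show "b \<Longrightarrow> bnd U m (\<lambda>z. L (f z))" using Suc.prems bnd_linear[OF L] by auto
    fix i :: "'n pt" assume i: "i \<in> Basis"
    have "\<forall>z\<in>U. pd (\<lambda>z. L (f z)) i z = L (pd f i z)"
      using pd_at[OF bounded_linear.has_derivative[OF L diff_at[OF U df]]] by (simp add: pd_def)
    moreover have "Wb b U (m-1) q (\<lambda>z. L (pd f i z))"
      using Suc.IH Suc.prems i by auto
    ultimately show "\<exists>h. (\<forall>z\<in>U. pd (\<lambda>z. L (f z)) i z = h z) \<and> Wb b U (m - 1) q h"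
      by (intro exI[of _ "\<lambda>z. L (pd f i z)"]) auto
  qed
qed

lemma Wb_uminus: "open U \<Longrightarrow> Wb b U m q f \<Longrightarrow> Wb b U m q (\<lambda>z. - f z)"
  using Wb_linear[of U uminus] bounded_linear_minus[OF bounded_linear_ident] by auto

lemma Wb_diff: "open U \<Longrightarrow> Wb b U m q f \<Longrightarrow> Wb b U m q g \<Longrightarrow> Wb b U m q (\<lambda>z. f z - g z)"
  using Wb_add[of U b m q f "\<lambda>z. - g z"] Wb_uminus[of U b m q g] by simp

lemma Wb_sum:
  assumes U: "open U" and A: "finite A"
  shows "(\<And>a. a \<in> A \<Longrightarrow> Wb b U m q (f a)) \<Longrightarrow> Wb b U m q (\<lambda>z. \<Sum>a\<in>A. f a z)"
  using A
proof (induction A rule: finite_induct)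
  case empty then show ?case using Wb_zero[OF U] by simp
next
  case (insert a A)
  then show ?case using Wb_add[OF U, of b m q "f a" "\<lambda>z. \<Sum>a\<in>A. f a z"] by simp
qed

lemma bnd_bilinear:
  assumes P: "bounded_bilinear P" and "bnd U m f" "bnd U m' g"
  shows "bnd U (m + m') (\<lambda>z. P (f z) (g z))"
proof -
  obtain K where K: "K > 0" "\<And>a b. norm (P a b) \<le> norm a * norm b * K" using bounded_bilinear.pos_bounded[OF P] by blast
  obtain d1 C1 where 1: "d1 > 0" "0 \<le> C1" "\<And>z. z \<in> U \<Longrightarrow> norm z < d1 \<Longrightarrow> norm (fst z) powr (- m) * norm (f z) \<le> C1"
    using assms(2) by (rule bnd_elim) blast
  obtain d2 C2 where 2: "d2 > 0" "0 \<le> C2" "\<And>z. z \<in> U \<Longrightarrow> norm z < d2 \<Longrightarrow> norm (fst z) powr (- m') * norm (g z) \<le> C2"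
    using assms(3) by (rule bnd_elim) blast
  show ?thesis
  proof (rule bnd_intro[of "min d1 d2" "C1 * C2 * K"])
    fix z assume z: "z \<in> U" "norm z < min d1 d2" "fst z \<noteq> 0"
    have e: "norm (fst z) powr (- (m + m')) = norm (fst z) powr (- m) * norm (fst z) powr (- m')"
      by (simp add: powr_add[symmetric])
    have "norm (fst z) powr (- (m + m')) * norm (P (f z) (g z)) \<le> norm (fst z) powr (- (m + m')) * (norm (f z) * norm (g z) * K)"
      using K by (simp add: mult_left_mono)
    also have "\<dots> = (norm (fst z) powr (- m) * norm (f z)) * (norm (fst z) powr (- m') * norm (g z)) * K"
      unfolding e by (simp add: algebra_simps)
    also have "\<dots> \<le> C1 * C2 * K"
      using 1(3)[of z] 2(3)[of z] z K 1(2) 2(2) by (intro mult_right_mono mult_mono) auto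
    finally show "norm (fst z) powr (- (m + m')) * norm (P (f z) (g z)) \<le> C1 * C2 * K" .
  qed (use 1 2 K in auto)
qed

lemma Wb_bilinear:
  fixes f :: "'n::finite pt \<Rightarrow> 'a::real_normed_vector" and g :: "'n pt \<Rightarrow> 'b::real_normed_vector"
    and P :: "'a \<Rightarrow> 'b \<Rightarrow> 'c::real_normed_vector"
  assumes U: "open U" and P: "bounded_bilinear P"
  shows "Wb b U m q f \<Longrightarrow> Wb b U m' q g \<Longrightarrow> Wb b U (m + m') q (\<lambda>z. P (f z) (g z))"
proof (induction q arbitrary: m m' f g)
  case 0
  have df: "f differentiable_on U" and dg: "g differentiable_on U" using 0 by auto
  have "(\<lambda>z. P (f z) (g z)) differentiable_on U"
    using bounded_bilinear.FDERIV[OF P diff_at[OF U df] diff_at[OF U dg]] by (intro diff_onI[OF U] differentiableI) blast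
  then show ?case using bnd_bilinear[OF P] 0 by auto
next
  case (Suc q)
  have df: "f differentiable_on U" and dg: "g differentiable_on U" using Suc.prems by auto
  show ?case
  proof (rule WbI_Suc[OF U])
    show "(\<lambda>z. P (f z) (g z)) differentiable_on U"
      using bounded_bilinear.FDERIV[OF P diff_at[OF U df] diff_at[OF U dg]] by (intro diff_onI[OF U] differentiableI) blast
    show "b \<Longrightarrow> bnd U (m + m') (\<lambda>z. P (f z) (g z))" using Suc.prems bnd_bilinear[OF P] by auto
    fix i :: "'n pt" assume i: "i \<in> Basis"
    have "\<forall>z\<in>U. pd (\<lambda>z. P (f z) (g z)) i z = P (f z) (pd g i z) + P (pd f i z) (g z)"
      using pd_at[OF bounded_bilinear.FDERIV[OF P diff_at[OF U df] diff_at[OF U dg]]] by (simp add: pd_def)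
    moreover have "Wb b U (m + m' - 1) q (\<lambda>z. P (f z) (pd g i z) + P (pd f i z) (g z))"
    proof (rule Wb_add[OF U])
      have "Wb b U m q f" "Wb b U (m'-1) q (pd g i)" using Suc.prems i Wb_mono_q[of q "Suc q"] by auto
      then have "Wb b U (m + (m' - 1)) q (\<lambda>z. P (f z) (pd g i z))" by (rule Suc.IH)
      then show "Wb b U (m + m' - 1) q (\<lambda>z. P (f z) (pd g i z))" by (simp add: algebra_simps)
      have "Wb b U m' q g" "Wb b U (m-1) q (pd f i)" using Suc.prems i Wb_mono_q[of q "Suc q"] by auto
      then have "Wb b U ((m - 1) + m') q (\<lambda>z. P (pd f i z) (g z))" using Suc.IH by blast
      then show "Wb b U (m + m' - 1) q (\<lambda>z. P (pd f i z) (g z))" by (simp add: algebra_simps)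
    qed
    ultimately show "\<exists>h. (\<forall>z\<in>U. pd (\<lambda>z. P (f z) (g z)) i z = h z) \<and> Wb b U (m + m' - 1) q h"
      by (intro exI[of _ "\<lambda>z. P (f z) (pd g i z) + P (pd f i z) (g z)"]) auto
  qed
qed



lemma lin_expand:
  fixes L :: "'a::euclidean_space \<Rightarrow> 'b::real_normed_vector"
  assumes "linear L"
  shows "L v = (\<Sum>j\<in>Basis. (v \<bullet> j) *\<^sub>R L j)"
proof -
  have "L v = L (\<Sum>j\<in>Basis. (v \<bullet> j) *\<^sub>R j)" by (simp add: euclidean_representation)
  also have "\<dots> = (\<Sum>j\<in>Basis. (v \<bullet> j) *\<^sub>R L j)"
    by (simp add: linear_sum[OF assms] linear_scale[OF assms])
  finally show ?thesis .
qed

lemma pd_expand: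
  assumes "f differentiable at w"
  shows "frechet_derivative f (at w) v = (\<Sum>j\<in>Basis. (v \<bullet> j) *\<^sub>R pd f j w)"
  unfolding pd_def by (rule lin_expand[OF linear_frechet_derivative[OF assms]])

locale compo =
  fixes U U' :: "'n::finite pt set" and G :: "'n pt \<Rightarrow> 'n pt" and \<beta> :: real
  assumes U: "open U" and U': "open U'"
    and GU: "\<And>z. z \<in> U' \<Longrightarrow> G z \<in> U"
    and Gfst: "\<And>z. z \<in> U' \<Longrightarrow> fst (G z) = fst z"
    and Gnear: "\<And>\<delta>. \<delta> > 0 \<Longrightarrow> \<exists>\<delta>'>0. \<forall>z\<in>U'. norm z < \<delta>' \<longrightarrow> norm (G z) < \<delta>"
    and beta: "1 \<le> \<beta>"
begin

lemma bnd_comp: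
  assumes "bnd U m h" shows "bnd U' m (\<lambda>z. h (G z))"
proof -
  obtain d C where 1: "d > 0" "0 \<le> C" "\<And>z. z \<in> U \<Longrightarrow> norm z < d \<Longrightarrow> norm (fst z) powr (- m) * norm (h z) \<le> C"
    using assms by (rule bnd_elim) blast
  obtain d' where d': "d' > 0" "\<forall>z\<in>U'. norm z < d' \<longrightarrow> norm (G z) < d" using Gnear[OF 1(1)] by blast
  show ?thesis
  proof (rule bnd_intro[of d' C])
    fix z assume z: "z \<in> U'" "norm z < d'"
    show "norm (fst z) powr (- m) * norm (h (G z)) \<le> C"
      using 1(3)[of "G z"] d' z GU Gfst by auto
  qed (use 1 d' in auto)
qed

lemma Wb_comp:
  fixes h :: "'n pt \<Rightarrow> 'b::real_normed_vector"
  assumes psi: "Wb b U' \<beta> q (\<lambda>z. G z - z)"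
  shows "Wb b U m q h \<Longrightarrow> Wb b U' m q (\<lambda>z. h (G z))"
  using psi
proof (induction q arbitrary: m h)
  case 0
  have dG: "G differentiable_on U'"
    using differentiable_on_add[OF Wb_diff_on[OF 0(2)] differentiable_on_id[unfolded id_def]] by simp
  have dh: "h differentiable_on U" using 0 by simp
  have "(\<lambda>z. h (G z)) differentiable_on U'"
  proof (rule diff_onI[OF U'])
    fix z assume z: "z \<in> U'"
    have "G differentiable at z" using dG z U' differentiable_on_eq_differentiable_at by blast
    moreover have "h differentiable at (G z)" using dh GU[OF z] U differentiable_on_eq_differentiable_at by blast
    ultimately show "(\<lambda>z. h (G z)) differentiable at z"
      using differentiable_chain_at[of G z h] by (simp add: o_def)
  qed
  then show ?case using bnd_comp 0 by auto
next
  case (Suc q)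
  have dG: "G differentiable_on U'"
    using differentiable_on_add[OF Wb_diff_on[OF Suc(3)] differentiable_on_id[unfolded id_def]] by simp
  have dpsi: "(\<lambda>z. G z - z) differentiable_on U'" using Suc(3) by auto
  have dh: "h differentiable_on U" using Suc by simp
  have dGz: "G differentiable at z" if "z \<in> U'" for z
    using dG that U' differentiable_on_eq_differentiable_at by blast
  have dhz: "h differentiable at (G z)" if "z \<in> U'" for z
    using dh GU[OF that] U differentiable_on_eq_differentiable_at by blast
  show ?case
  proof (rule WbI_Suc[OF U'])
    show "(\<lambda>z. h (G z)) differentiable_on U'"
      using dGz dhz differentiable_chain_at[of G _ h] by (intro diff_onI[OF U']) (simp add: o_def)
    show "b \<Longrightarrow> bnd U' m (\<lambda>z. h (G z))" using Suc.prems bnd_comp by auto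
    fix i :: "'n pt" assume i: "i \<in> Basis"
    let ?F = "\<lambda>z. \<Sum>j\<in>Basis. ((i \<bullet> j) + pd (\<lambda>z. G z - z) i z \<bullet> j) *\<^sub>R pd h j (G z)"
    have "pd (\<lambda>z. h (G z)) i z = ?F z" if z: "z \<in> U'" for z
    proof -
      have hG: "((\<lambda>z. h (G z)) has_derivative (frechet_derivative h (at (G z)) \<circ> frechet_derivative G (at z))) (at z)"
        using diff_chain_at[OF frechet_derivative_works[THEN iffD1, OF dGz[OF z]] frechet_derivative_works[THEN iffD1, OF dhz[OF z]]]
        by (simp add: o_def)
      have "pd G i z = i + pd (\<lambda>z. G z - z) i z"
      proof -
        have e: "(\<lambda>z. z + (G z - z)) = G" by simp
        have "((\<lambda>z. z + (G z - z)) has_derivative (\<lambda>v. v + frechet_derivative (\<lambda>z. G z - z) (at z) v)) (at z)"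
          by (intro has_derivative_add has_derivative_ident diff_at[OF U' dpsi z])
        then have "(G has_derivative (\<lambda>v. v + frechet_derivative (\<lambda>z. G z - z) (at z) v)) (at z)"
          unfolding e .
        from pd_at[OF this] show ?thesis by (simp add: pd_def)
      qed
      then have "pd (\<lambda>z. h (G z)) i z = frechet_derivative h (at (G z)) (i + pd (\<lambda>z. G z - z) i z)"
        using pd_at[OF hG] by (simp add: pd_def)
      also have "\<dots> = ?F z"
        by (subst pd_expand[OF dhz[OF z]]) (simp add: inner_add_left)
      finally show ?thesis .
    qed
    moreover have "Wb b U' (m-1) q ?F"
    proof (rule Wb_sum[OF U'], simp)
      fix j :: "'n pt" assume j: "j \<in> Basis"
      have c: "Wb b U' 0 q (\<lambda>z. (i \<bullet> j) + pd (\<lambda>z. G z - z) i z \<bullet> j)"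
      proof (rule Wb_add[OF U' Wb_const[OF U']])
        have "Wb b U' (\<beta> - 1) q (pd (\<lambda>z. G z - z) i)" using Suc(3) i by auto
        then have "Wb b U' (\<beta> - 1) q (\<lambda>z. pd (\<lambda>z. G z - z) i z \<bullet> j)"
          by (rule Wb_linear[OF U' bounded_linear_inner_left])
        then show "Wb b U' 0 q (\<lambda>z. pd (\<lambda>z. G z - z) i z \<bullet> j)"
          by (rule Wb_mono_m[rotated]) (use beta in simp)
      qed simp
      have "Wb b U' (m-1) q (\<lambda>z. pd h j (G z))"
        using Suc.IH[of "m-1" "pd h j"] Suc.prems j Wb_mono_q[of q "Suc q"] by auto
      then have "Wb b U' (0 + (m-1)) q (\<lambda>z. ((i \<bullet> j) + pd (\<lambda>z. G z - z) i z \<bullet> j) *\<^sub>R pd h j (G z))"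
        by (rule Wb_bilinear[OF U' bounded_bilinear_scaleR c])
      then show "Wb b U' (m-1) q (\<lambda>z. ((i \<bullet> j) + pd (\<lambda>z. G z - z) i z \<bullet> j) *\<^sub>R pd h j (G z))" by simp
    qed
    ultimately show "\<exists>h'. (\<forall>z\<in>U'. pd (\<lambda>z. h (G z)) i z = h' z) \<and> Wb b U' (m - 1) q h'"
      by (intro exI[of _ ?F]) auto
  qed
qed

end



lemma sum_inner_bound:
  fixes v :: "'a::euclidean_space" and c :: "'a \<Rightarrow> 'b::real_normed_vector"
  shows "norm (\<Sum>j\<in>Basis. (v \<bullet> j) *\<^sub>R c j) \<le> norm v * (\<Sum>j\<in>Basis. norm (c j))"
proof -
  have "norm (\<Sum>j\<in>Basis. (v \<bullet> j) *\<^sub>R c j) \<le> (\<Sum>j\<in>Basis. norm ((v \<bullet> j) *\<^sub>R c j))"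
    by (rule norm_sum)
  also have "\<dots> \<le> (\<Sum>j\<in>Basis. norm v * norm (c j))"
    by (intro sum_mono) (simp add: Basis_le_norm mult_right_mono)
  finally show ?thesis by (simp add: sum_distrib_left)
qed

lemma Wb_absorb:
  fixes v a :: "'n::finite pt \<Rightarrow> 'n pt" and c :: "'n pt \<Rightarrow> 'n pt \<Rightarrow> 'n pt"
  assumes U: "open U"
    and cW: "\<And>j. j \<in> Basis \<Longrightarrow> Wb b U 0 q (c j)"
    and small: "\<delta>0 > 0" "\<And>z. z \<in> U \<Longrightarrow> norm z < \<delta>0 \<Longrightarrow> (\<Sum>j\<in>Basis. norm (c j z)) \<le> 1/2"
  shows "Wb b U m q a \<Longrightarrow> (\<And>q'. Wb False U m q' v) \<Longrightarrow>
         (\<And>z. z \<in> U \<Longrightarrow> v z = a z + (\<Sum>j\<in>Basis. (v z \<bullet> j) *\<^sub>R c j z)) \<Longrightarrow> Wb b U m q v"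
  using cW
proof (induction q arbitrary: m a v)
  case 0
  have dv: "v differentiable_on U" using 0(2)[of 0] by simp
  have "bnd U m v" if bb: b
  proof -
    obtain d C where 1: "d > 0" "0 \<le> C" "\<And>z. z \<in> U \<Longrightarrow> norm z < d \<Longrightarrow> norm (fst z) powr (- m) * norm (a z) \<le> C"
      using 0(1) bb by (auto elim!: bnd_elim)
    show ?thesis
    proof (rule bnd_intro[of "min d \<delta>0" "2 * C"])
      fix z assume z: "z \<in> U" "norm z < min d \<delta>0"
      have "norm (v z) \<le> norm (a z) + norm (\<Sum>j\<in>Basis. (v z \<bullet> j) *\<^sub>R c j z)"
        using 0(3)[OF z(1)] by (metis norm_triangle_ineq)
      also have "\<dots> \<le> norm (a z) + norm (v z) * (1/2)"
        using sum_inner_bound[of "v z" "\<lambda>j. c j z"] small(2)[of z] z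
        by (smt (verit, best) mult_left_mono norm_ge_zero)
      finally have "norm (v z) \<le> 2 * norm (a z)" by simp
      then have "norm (fst z) powr (- m) * norm (v z) \<le> 2 * (norm (fst z) powr (- m) * norm (a z))"
        by (metis mult.left_commute mult_left_mono powr_ge_zero)
      also have "\<dots> \<le> 2 * C" using 1(3)[of z] z by simp
      finally show "norm (fst z) powr (- m) * norm (v z) \<le> 2 * C" .
    qed (use 1 small in auto)
  qed
  then show ?case using dv by simp
next
  case (Suc q)
  have cq: "Wb b U 0 q (c j)" if "j \<in> Basis" for j using Wb_mono_q[OF _ Suc.prems(4)[OF that], of q] by simp
  have vq: "Wb b U m q v"
    by (rule Suc.IH[of m a v, OF Wb_mono_q[OF _ Suc.prems(1)] Suc.prems(2) Suc.prems(3) cq]) auto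
  have dv: "v differentiable_on U" using Suc.prems(2)[of 0] by simp
  have da: "a differentiable_on U" using Suc.prems(1) by simp
  have dc: "c j differentiable_on U" if "j \<in> Basis" for j using Suc.prems(4)[OF that] by simp
  show ?case
  proof (rule WbI_Suc[OF U dv])
    show "b \<Longrightarrow> bnd U m v" using vq by (cases q) auto
    fix k :: "'n pt" assume k: "k \<in> Basis"
    let ?a' = "\<lambda>z. pd a k z + (\<Sum>j\<in>Basis. (v z \<bullet> j) *\<^sub>R pd (c j) k z)"
    have eq: "pd v k z = ?a' z + (\<Sum>j\<in>Basis. (pd v k z \<bullet> j) *\<^sub>R c j z)" if z: "z \<in> U" for z
    proof -
      let ?R = "\<lambda>z. a z + (\<Sum>j\<in>Basis. (v z \<bullet> j) *\<^sub>R c j z)"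
      have "(?R has_derivative (\<lambda>h. frechet_derivative a (at z) h + (\<Sum>j\<in>Basis.
               (v z \<bullet> j) *\<^sub>R frechet_derivative (c j) (at z) h + (frechet_derivative v (at z) h \<bullet> j) *\<^sub>R c j z))) (at z)"
        by (intro has_derivative_add has_derivative_sum has_derivative_scaleR diff_at[OF U da z]
              diff_at[OF U dc z] bounded_linear.has_derivative[OF bounded_linear_inner_left] diff_at[OF U dv z]) auto
      from pd_at[OF this, of k] have "pd ?R k z = ?a' z + (\<Sum>j\<in>Basis. (pd v k z \<bullet> j) *\<^sub>R c j z)"
        by (simp add: pd_def sum.distrib algebra_simps)
      moreover have "pd v k z = pd ?R k z"
        by (rule pd_cong[OF U _ dv z]) (use Suc.prems(3) in auto)
      ultimately show ?thesis by simp
    qed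
    have a'W: "Wb b U (m - 1) q ?a'"
    proof (rule Wb_add[OF U])
      show "Wb b U (m - 1) q (pd a k)" using Suc.prems(1) k by auto
      show "Wb b U (m - 1) q (\<lambda>z. \<Sum>j\<in>Basis. (v z \<bullet> j) *\<^sub>R pd (c j) k z)"
      proof (rule Wb_sum[OF U], simp)
        fix j :: "'n pt" assume j: "j \<in> Basis"
        have "Wb b U m q (\<lambda>z. v z \<bullet> j)" by (rule Wb_linear[OF U bounded_linear_inner_left vq])
        moreover have "Wb b U (0 - 1) q (pd (c j) k)" using Suc.prems(4)[OF j] k by auto
        ultimately have "Wb b U (m + (0 - 1)) q (\<lambda>z. (v z \<bullet> j) *\<^sub>R pd (c j) k z)"
          by (rule Wb_bilinear[OF U bounded_bilinear_scaleR])
        then show "Wb b U (m - 1) q (\<lambda>z. (v z \<bullet> j) *\<^sub>R pd (c j) k z)" by simp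
      qed
    qed
    have "Wb b U (m - 1) q (pd v k)"
    proof (rule Suc.IH[OF a'W])
      fix q' show "Wb False U (m - 1) q' (pd v k)" using Suc.prems(2)[of "Suc q'"] k by auto
    qed (use eq cq in auto)
    then show "\<exists>h. (\<forall>z\<in>U. pd v k z = h z) \<and> Wb b U (m - 1) q h" by blast
  qed
qed



lemma open_Vdom:
  assumes "b \<le> pi"
  shows "open (Vdom a b r1 r2 :: 'n::finite pt set)"
proof -
  define S where "S = {x::complex. x \<noteq> 0 \<and> (if a = - pi \<and> b = pi then True else a < Arg x \<and> Arg x < b) \<and> norm x < r1}"
  have V: "(Vdom a b r1 r2 :: 'n pt set) = S \<times> ball 0 r2" by (auto simp: Vdom_def S_def)
  have "open S"
  proof (cases "a = - pi \<and> b = pi")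
    case True
    then have "S = ball 0 r1 - {0}" by (auto simp: S_def)
    then show ?thesis by (simp add: open_Diff)
  next
    case False
    have "S = (Arg -` {a<..<b} \<inter> - \<real>\<^sub>\<le>\<^sub>0) \<inter> ball 0 r1"
    proof (intro equalityI subsetI)
      fix x assume x: "x \<in> S"
      have "x \<notin> \<real>\<^sub>\<le>\<^sub>0"
      proof
        assume "x \<in> \<real>\<^sub>\<le>\<^sub>0"
        then have "Re x \<le> 0" "Im x = 0" by (auto simp: complex_nonpos_Reals_iff)
        moreover have "x \<noteq> 0" using x by (auto simp: S_def)
        ultimately have "Re x < 0" by (metis complex_eq_iff order_le_less zero_complex.simps)
        then have "Arg x = pi" using \<open>Im x = 0\<close> by (simp add: Arg_eq_pi)
        then show False using x False assms by (auto simp: S_def)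
      qed
      then show "x \<in> (Arg -` {a<..<b} \<inter> - \<real>\<^sub>\<le>\<^sub>0) \<inter> ball 0 r1" using x False by (auto simp: S_def)
    next
      fix x assume x: "x \<in> (Arg -` {a<..<b} \<inter> - \<real>\<^sub>\<le>\<^sub>0) \<inter> ball 0 r1"
      then have "x \<noteq> 0" by auto
      then show "x \<in> S" using x False by (auto simp: S_def)
    qed
    moreover have "open (Arg -` {a<..<b} \<inter> - \<real>\<^sub>\<le>\<^sub>0)"
    proof -
      have o: "open (- \<real>\<^sub>\<le>\<^sub>0 :: complex set)" by (simp add: open_Compl)
      show ?thesis using continuous_on_open_vimage[OF o, of Arg] continuous_on_Arg open_greaterThanLessThan by blast
    qed
    ultimately show ?thesis by auto
  qed
  then show ?thesis unfolding V by (intro open_Times) auto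
qed

lemma Vdom_mono: "r1' \<le> r1 \<Longrightarrow> r2' \<le> r2 \<Longrightarrow> Vdom a b r1' r2' \<subseteq> Vdom a b r1 r2"
  by (auto simp: Vdom_def)

lemma smooth_on_subset: "S' \<subseteq> S \<Longrightarrow> smooth_on S f \<Longrightarrow> smooth_on S' f"
  unfolding smooth_on_def using differentiable_on_subset by blast

lemma Wb_False_m: "Wb False U m q f \<Longrightarrow> Wb False U m' q f"
  unfolding Wb_iff by simp

lemma Wb_id: "open U \<Longrightarrow> Wb False U m q (\<lambda>z. z)"
proof (cases q)
  case 0 then show ?thesis by (simp add: differentiable_on_id[unfolded id_def])
next
  case (Suc q')
  assume U: "open U"
  show ?thesis unfolding Suc
  proof (rule WbI_Suc[OF U])
    show "(\<lambda>z. z) differentiable_on U" by (simp add: differentiable_on_id[unfolded id_def])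
    fix i :: "'a pt" assume "i \<in> Basis"
    have "Wb False U (m - 1) q' (\<lambda>z. i)" using Wb_const[OF U, of 0] Wb_False_m by blast
    then show "\<exists>h. (\<forall>z\<in>U. pd (\<lambda>z. z) i z = h z) \<and> Wb False U (m - 1) q' h"
      by (intro exI[of _ "\<lambda>z. i"]) (auto simp: pd_def)
  qed simp
qed

lemma smooth_cong: "open U \<Longrightarrow> (\<And>z. z \<in> U \<Longrightarrow> f z = g z) \<Longrightarrow> smooth_on U f \<Longrightarrow> smooth_on U (g :: 'n::finite pt \<Rightarrow> 'b::real_normed_vector)"
  using smooth_iff[of U f 0] smooth_iff[of U g 0] Wb_cong by metis

lemma bnd_norm: "bnd U m f \<Longrightarrow> bnd U m (\<lambda>z. norm (f z))"
  unfolding bnd_def by simp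

lemma bnd_sum_norm:
  assumes "finite A"
  shows "(\<And>i. i \<in> A \<Longrightarrow> bnd U m (f i)) \<Longrightarrow> bnd U m (\<lambda>z. \<Sum>i\<in>A. norm (f i z))"
  using assms
proof (induction A rule: finite_induct)
  case empty then show ?case by (simp add: bnd_def) (use zero_less_one in blast)
next
  case (insert a A)
  then show ?case using bnd_add[OF bnd_norm, of U m "f a" "\<lambda>z. \<Sum>i\<in>A. norm (f i z)"] by simp
qed

lemma pd_comp:
  assumes "G differentiable at z" "h differentiable at (G z)"
  shows "pd (\<lambda>z. h (G z)) i z = frechet_derivative h (at (G z)) (pd G i z)"
proof -
  have "((\<lambda>z. h (G z)) has_derivative (frechet_derivative h (at (G z)) \<circ> frechet_derivative G (at z))) (at z)"
    using diff_chain_at[OF frechet_derivative_works[THEN iffD1, OF assms(1)] frechet_derivative_works[THEN iffD1, OF assms(2)]]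
    by (simp add: o_def)
  from pd_at[OF this] show ?thesis by (simp add: pd_def)
qed

lemma pd_G:
  assumes "(\<lambda>z. G z - z) differentiable at z"
  shows "pd G i z = i + pd (\<lambda>z. G z - z) i z"
proof -
  have e: "(\<lambda>z. z + (G z - z)) = G" by simp
  have "((\<lambda>z. z + (G z - z)) has_derivative (\<lambda>v. v + frechet_derivative (\<lambda>z. G z - z) (at z) v)) (at z)"
    by (intro has_derivative_add has_derivative_ident frechet_derivative_works[THEN iffD1, OF assms])
  then have "(G has_derivative (\<lambda>v. v + frechet_derivative (\<lambda>z. G z - z) (at z) v)) (at z)"
    unfolding e .
  from pd_at[OF this] show ?thesis by (simp add: pd_def)
qed



lemma fixpoint_part:
  fixes \<phi> :: "'n::finite pt \<Rightarrow> 'n pt" and x :: complex and y' :: "complex ^ 'n"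
  assumes D: "open D" and d\<phi>: "\<phi> differentiable_on D"
    and \<rho>: "\<rho> > 0" and inD: "\<And>y. norm y \<le> \<rho> \<Longrightarrow> (x, y) \<in> D"
    and N: "\<And>y. norm y \<le> \<rho> \<Longrightarrow> (\<Sum>i\<in>Basis. norm (pd \<phi> i (x, y))) \<le> 1/2"
    and B: "\<And>y. norm y \<le> \<rho> \<Longrightarrow> norm (\<phi> (x, y)) \<le> \<rho>/2"
    and y': "norm y' \<le> \<rho>/2"
  shows "\<exists>y. norm y \<le> \<rho> \<and> y + snd (\<phi> (x, y)) = y'"
proof -
  define S where "S = cball (0::complex^'n) \<rho>"
  define g where "g y = snd (\<phi> (x, y))" for y
  define T where "T y = y' - g y" for y
  have lip: "norm (g y1 - g y2) \<le> 1/2 * norm (y1 - y2)" if "y1 \<in> S" "y2 \<in> S" for y1 y2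
  proof (rule differentiable_bound[of S g "\<lambda>y. \<lambda>v. snd (frechet_derivative \<phi> (at (x, y)) (0, v))"])
    show "convex S" by (simp add: S_def)
    fix y assume y: "y \<in> S"
    have xy: "(x, y) \<in> D" using y inD by (simp add: S_def)
    have "((\<lambda>y. (x, y)) has_derivative (\<lambda>v. (0, v))) (at y within S)"
      by (intro has_derivative_Pair has_derivative_const has_derivative_ident)
    moreover have "(\<phi> has_derivative frechet_derivative \<phi> (at (x, y))) (at (x, y))"
      by (rule diff_at[OF D d\<phi> xy])
    ultimately have "((\<lambda>y. \<phi> (x, y)) has_derivative (\<lambda>v. frechet_derivative \<phi> (at (x, y)) (0, v))) (at y within S)"
      using has_derivative_in_compose[of "\<lambda>y. (x, y)" _ y S \<phi>] by (simp add: o_def has_derivative_at_withinI)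
    then show "(g has_derivative (\<lambda>v. snd (frechet_derivative \<phi> (at (x, y)) (0, v)))) (at y within S)"
      unfolding g_def by (rule has_derivative_snd)
    show "onorm (\<lambda>v. snd (frechet_derivative \<phi> (at (x, y)) (0, v))) \<le> 1/2"
    proof (rule onorm_le)
      fix v :: "complex^'n"
      have dxy: "\<phi> differentiable at (x, y)" using d\<phi> D xy differentiable_on_eq_differentiable_at by blast
      have "norm (snd (frechet_derivative \<phi> (at (x, y)) (0, v))) \<le> norm (frechet_derivative \<phi> (at (x, y)) (0, v))"
        by (rule norm_snd_le')
      also have "\<dots> = norm (\<Sum>j\<in>Basis. ((0, v) \<bullet> j) *\<^sub>R pd \<phi> j (x, y))"
        by (simp add: pd_expand[OF dxy])
      also have "\<dots> \<le> norm ((0::complex, v)) * (\<Sum>j\<in>Basis. norm (pd \<phi> j (x, y)))"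
        by (rule sum_inner_bound)
      also have "\<dots> \<le> norm v * (1/2)"
        using N[of y] y by (intro mult_mono) (auto simp: S_def norm_Pair sum_nonneg)
      finally show "norm (snd (frechet_derivative \<phi> (at (x, y)) (0, v))) \<le> 1/2 * norm v" by simp
    qed
  qed (use that in auto)
  have "\<exists>!y\<in>S. T y = y"
  proof (rule Banach_fix[of S "1/2"])
    show "complete S" by (simp add: S_def complete_eq_closed)
    show "S \<noteq> {}" using \<rho> by (auto simp: S_def)
    show "T ` S \<subseteq> S"
    proof
      fix z assume "z \<in> T ` S"
      then obtain y where y: "y \<in> S" "z = T y" by blast
      have "norm (g y) \<le> \<rho>/2" using B[of y] y norm_snd_le'[of "\<phi> (x, y)"] by (simp add: S_def g_def)
      then have "norm (T y) \<le> \<rho>" using y' norm_triangle_ineq4[of y' "g y"] by (simp add: T_def)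
      then show "z \<in> S" using y by (simp add: S_def)
    qed
    fix y1 y2 assume "y1 \<in> S" "y2 \<in> S"
    then show "dist (T y1) (T y2) \<le> 1/2 * dist y1 y2"
      using lip[of y1 y2] by (simp add: T_def dist_norm norm_minus_commute)
  qed auto
  then obtain y where "y \<in> S" "T y = y" by blast
  then show ?thesis by (intro exI[of _ y]) (auto simp: S_def T_def g_def algebra_simps)
qed



lemma powr_bound_inv:
  fixes x :: real
  assumes "x > 0" "x powr (- m) * s \<le> C"
  shows "s \<le> C * x powr m"
proof -
  have "s = x powr m * (x powr (- m) * s)"
    using assms(1) by (simp add: mult.assoc[symmetric] powr_add[symmetric])
  also have "\<dots> \<le> x powr m * C" using assms by (intro mult_left_mono) auto
  finally show ?thesis by (simp add: mult.commute)
qed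

theorem proposition7p10:
  fixes a b r1 r2 \<beta> :: real and p :: nat
    and F :: "'n::finite pt \<Rightarrow> 'n pt"
  assumes "- pi \<le> a" "a < b" "b \<le> pi" "r1 > 0" "r2 > 0"
    and "\<beta> > 1" "p \<ge> 1"
    and "D_class \<beta> p (Vdom a b r1 r2) F"
  shows "\<exists>r1' r2'. r1' > 0 \<and> r2' > 0 \<and>
           Vdom a b r1' r2' \<subseteq> F ` Vdom a b r1 r2 \<and>
           D_class \<beta> p (Vdom a b r1' r2') (inv_into (Vdom a b r1 r2) F)"
proof -
  define D where "D = (Vdom a b r1 r2 :: 'n pt set)"
  define \<phi> where "\<phi> z = F z - z" for z
  have Fphi: "F z = z + \<phi> z" for z by (simp add: \<phi>_def)
  obtain W where diffeo: "smooth_diffeo D W F" and Ffst: "\<And>z. z \<in> D \<Longrightarrow> fst (F z) = fst z"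
    and ord: "of_order D \<beta> p \<phi>"
    using assms(8) unfolding D_class_def D_def \<phi>_def by blast
  have W: "open W" "W = F ` D" "inj_on F D" "smooth_on D F" "smooth_on W (inv_into D F)"
    using diffeo unfolding smooth_diffeo_def by auto
  have D: "open D" unfolding D_def by (rule open_Vdom[OF assms(3)])
  have phism: "smooth_on D \<phi>" and phiW: "Wb True D \<beta> p \<phi>" using ord of_order_iff by blast+
  have phifst: "fst (\<phi> z) = 0" if "z \<in> D" for z using Ffst[OF that] by (simp add: \<phi>_def)
  have dphi: "\<phi> differentiable_on D" using phiW by (rule Wb_diff_on)
  obtain p' where p': "p = Suc p'" using assms(7) by (cases p) auto
  have phi1: "Wb True D (\<beta> - 1) p' (pd \<phi> i)" if "i \<in> Basis" for i using phiW that p' by auto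
  have bnd0: "bnd D \<beta> \<phi>" using phiW by (rule Wb_bnd)
  have bndN: "bnd D (\<beta> - 1) (\<lambda>z. \<Sum>i\<in>Basis. norm (pd \<phi> i z))"
    by (rule bnd_sum_norm[OF finite_Basis], rule Wb_bnd[OF phi1], assumption)
  obtain da C0 where da: "da > 0" "0 \<le> C0"
    "\<And>z. z \<in> D \<Longrightarrow> norm z < da \<Longrightarrow> norm (fst z) powr (- \<beta>) * norm (\<phi> z) \<le> C0"
    using bnd0 by (rule bnd_elim) blast
  obtain d1 C1 where d1: "d1 > 0" "0 \<le> C1"
    "\<And>z. z \<in> D \<Longrightarrow> norm z < d1 \<Longrightarrow> norm (fst z) powr (- (\<beta> - 1)) * norm (\<Sum>i\<in>Basis. norm (pd \<phi> i z)) \<le> C1"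
    using bndN by (rule bnd_elim) blast
  define \<delta> where "\<delta> = min (min da d1) (min 1 r2)"
  have \<delta>: "\<delta> > 0" "\<delta> \<le> da" "\<delta> \<le> d1" "\<delta> \<le> 1" "\<delta> \<le> r2"
    using da d1 assms(5) by (auto simp: \<delta>_def)
  define \<rho> where "\<rho> = \<delta> / 4"
  define t where "t = (1 / (2 * C1 + 1)) powr (1 / (\<beta> - 1))"
  define r1' where "r1' = min (min r1 (\<delta> / 4)) (min t (\<rho> / (2 * C0 + 1)))"
  define r2' where "r2' = \<rho> / 2"
  have t: "t > 0" "t powr (\<beta> - 1) = 1 / (2 * C1 + 1)"
    using d1(2) assms(6) by (auto simp: t_def powr_powr)
  have r1'pos: "r1' > 0"
  proof -
    have "\<rho> / (2 * C0 + 1) > 0" using \<delta> da(2) by (simp add: \<rho>_def)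
    then show "r1' > 0" using assms(4) \<delta> t unfolding r1'_def by simp
  qed
  have r1'b: "r1' \<le> r1" "r1' \<le> \<delta> / 4" "r1' \<le> t" "r1' \<le> \<rho> / (2 * C0 + 1)"
    unfolding r1'_def
    apply (rule min.coboundedI1, rule min.cobounded1)
    apply (rule min.coboundedI1, rule min.cobounded2)
    apply (rule min.coboundedI2, rule min.cobounded1)
    apply (rule min.coboundedI2, rule min.cobounded2)
    done
  note r1' = r1'pos r1'b
  have r2': "r2' > 0" "r2' \<le> r2" using \<delta> by (auto simp: r2'_def \<rho>_def)
  have est: "(\<Sum>i\<in>Basis. norm (pd \<phi> i z)) \<le> 1/2 \<and> norm (\<phi> z) \<le> C0 * norm (fst z)"
    if z: "z \<in> D" "norm z < \<delta>" "norm (fst z) < r1'" for z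
  proof -
    have x0: "fst z \<noteq> 0" using z(1) by (auto simp: D_def Vdom_def)
    then have xpos: "norm (fst z) > 0" by simp
    have x1: "norm (fst z) < 1" using z(2) \<delta>(4) norm_fst_le'[of z] by linarith
    have nn: "norm (\<Sum>i\<in>Basis. norm (pd \<phi> i z)) = (\<Sum>i\<in>Basis. norm (pd \<phi> i z))"
      by (simp add: sum_nonneg)
    have "norm (fst z) powr (- (\<beta> - 1)) * (\<Sum>i\<in>Basis. norm (pd \<phi> i z)) \<le> C1"
      using d1(3)[OF z(1)] z(2) \<delta> unfolding nn by auto
    then have "(\<Sum>i\<in>Basis. norm (pd \<phi> i z)) \<le> C1 * norm (fst z) powr (\<beta> - 1)"
      by (rule powr_bound_inv[OF xpos])
    also have "\<dots> \<le> C1 * t powr (\<beta> - 1)"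
      using z(3) r1'(4) xpos assms(6) d1(2) by (intro mult_left_mono powr_mono2) auto
    also have "\<dots> = C1 / (2 * C1 + 1)" using t(2) by simp
    also have "\<dots> \<le> 1/2" using d1(2) by (simp add: field_simps)
    finally have 1: "(\<Sum>i\<in>Basis. norm (pd \<phi> i z)) \<le> 1/2" .
    have "norm (fst z) powr (- \<beta>) * norm (\<phi> z) \<le> C0" using da(3)[OF z(1)] z(2) \<delta> by auto
    then have "norm (\<phi> z) \<le> C0 * norm (fst z) powr \<beta>"
      by (rule powr_bound_inv[OF xpos])
    also have "\<dots> \<le> C0 * norm (fst z)"
    proof -
      have "norm (fst z) powr \<beta> = norm (fst z) * norm (fst z) powr (\<beta> - 1)"
        using xpos powr_add[of "norm (fst z)" 1 "\<beta> - 1"] by simp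
      also have "\<dots> \<le> norm (fst z)" using x1 xpos assms(6)
        by (simp add: mult_left_le powr_le1 less_imp_le)
      finally show ?thesis using da(2) by (simp add: mult_left_mono)
    qed
    finally show ?thesis using 1 by simp
  qed
  define D' where "D' = (Vdom a b r1' r2' :: 'n pt set)"
  have \<rho>pos: "\<rho> > 0" using \<delta> by (simp add: \<rho>_def)
  have D'sub: "D' \<subseteq> D" unfolding D'_def D_def by (rule Vdom_mono) (use r1' r2' in auto)
  have D'open: "open D'" unfolding D'_def by (rule open_Vdom[OF assms(3)])
  have pre: "\<exists>y. norm y \<le> \<rho> \<and> (fst z, y) \<in> D \<and> F (fst z, y) = z" if z: "z \<in> D'" for z
  proof -
    obtain x y' where zxy: "z = (x, y')" by (cases z)
    have xD: "x \<noteq> 0" "(if a = - pi \<and> b = pi then True else a < Arg x \<and> Arg x < b)"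
      "norm x < r1'" "norm y' < r2'" using z by (auto simp: D'_def Vdom_def zxy)
    have inD: "(x, y) \<in> D" if "norm y \<le> \<rho>" for y
      using xD that r1' \<delta> by (auto simp: D_def Vdom_def \<rho>_def)
    have small: "norm (x, y) < \<delta>" if "norm y \<le> \<rho>" for y
    proof -
      have "norm (x, y) \<le> norm x + norm y" by (rule norm_Pair_le)
      then show ?thesis using xD(3) that r1' \<delta>(1) by (simp add: \<rho>_def)
    qed
    have "\<exists>y. norm y \<le> \<rho> \<and> y + snd (\<phi> (x, y)) = y'"
    proof (rule fixpoint_part[OF D dphi \<rho>pos inD])
      fix y :: "complex^'n" assume y: "norm y \<le> \<rho>"
      have e: "(\<Sum>i\<in>Basis. norm (pd \<phi> i (x, y))) \<le> 1/2 \<and> norm (\<phi> (x, y)) \<le> C0 * norm x"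
        using est[of "(x, y)"] inD[OF y] small[OF y] xD(3) by simp
      then show "(\<Sum>i\<in>Basis. norm (pd \<phi> i (x, y))) \<le> 1/2" by simp
      have "C0 * norm x \<le> C0 * r1'" using xD(3) da(2) by (simp add: mult_left_mono)
      also have "\<dots> \<le> \<rho> / 2"
      proof -
        have "C0 * r1' \<le> C0 * (\<rho> / (2 * C0 + 1))" using r1'(5) da(2) by (rule mult_left_mono)
        also have "\<dots> \<le> \<rho> / 2" using da(2) \<rho>pos by (simp add: field_simps)
        finally show ?thesis .
      qed
      finally show "norm (\<phi> (x, y)) \<le> \<rho> / 2" using e by simp
    next
      show "norm y' \<le> \<rho> / 2" using xD(4) by (simp add: r2'_def)
    qed assumption
    then obtain y where y: "norm y \<le> \<rho>" "y + snd (\<phi> (x, y)) = y'" by blast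
    have "fst (\<phi> (x, y)) = 0" using phifst[OF inD[OF y(1)]] .
    then have "F (x, y) = (x, y')" using y(2) by (simp add: Fphi prod_eq_iff)
    then show ?thesis using y inD zxy by auto
  qed
  define G where "G = inv_into D F"
  have GP: "G z \<in> D \<and> F (G z) = z \<and> fst (G z) = fst z \<and> norm (snd (G z)) \<le> \<rho>" if z: "z \<in> D'" for z
  proof -
    obtain y where y: "norm y \<le> \<rho>" "(fst z, y) \<in> D" "F (fst z, y) = z" using pre[OF z] by blast
    have "G z = (fst z, y)" unfolding G_def using inv_into_f_f[OF W(3) y(2)] y(3) by simp
    then show ?thesis using y by simp
  qed
  have D'img: "D' \<subseteq> F ` D"
  proof
    fix z assume "z \<in> D'" then show "z \<in> F ` D" using GP[of z] by (metis image_eqI)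
  qed
  have Gsmall: "norm (G z) < \<delta> \<and> norm (fst (G z)) < r1'" if z: "z \<in> D'" for z
  proof -
    have x: "norm (fst z) < r1'" using z by (auto simp: D'_def Vdom_def)
    have "norm (G z) \<le> norm (fst (G z)) + norm (snd (G z))" using norm_Pair_le[of "fst (G z)" "snd (G z)"] by simp
    then show ?thesis using GP[OF z] x r1' \<delta>(1) by (simp add: \<rho>_def)
  qed
  have estG: "(\<Sum>i\<in>Basis. norm (pd \<phi> i (G z))) \<le> 1/2 \<and> norm (\<phi> (G z)) \<le> C0 * norm (fst z)"
    if z: "z \<in> D'" for z
    using est[of "G z"] GP[OF z] Gsmall[OF z] by simp
  have psi_eq: "G z - z = - \<phi> (G z)" if z: "z \<in> D'" for z
  proof -
    have "z = G z + \<phi> (G z)" using GP[OF z] Fphi[of "G z"] by simp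
    then show ?thesis by (simp add: algebra_simps)
  qed
  interpret compo D D' G \<beta>
  proof
    show "open D" by (rule D)
    show "open D'" by (rule D'open)
    show "\<And>z. z \<in> D' \<Longrightarrow> G z \<in> D" using GP by blast
    show "\<And>z. z \<in> D' \<Longrightarrow> fst (G z) = fst z" using GP by blast
    show "1 \<le> \<beta>" using assms(6) by simp
    fix e :: real assume e: "e > 0"
    show "\<exists>\<delta>'>0. \<forall>z\<in>D'. norm z < \<delta>' \<longrightarrow> norm (G z) < e"
    proof (intro exI[of _ "e / (1 + C0)"] conjI ballI impI)
      show "e / (1 + C0) > 0" using e da(2) by simp
      fix z assume z: "z \<in> D'" "norm z < e / (1 + C0)"
      have "norm (G z) = norm (z + (G z - z))" by simp
      also have "\<dots> \<le> norm z + norm (\<phi> (G z))" using psi_eq[OF z(1)] norm_triangle_ineq[of z "G z - z"] by simp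
      also have "\<dots> \<le> norm z + C0 * norm z"
        using estG[OF z(1)] norm_fst_le'[of z] da(2) by (smt (verit) mult_left_mono)
      also have "\<dots> = (1 + C0) * norm z" by (simp add: algebra_simps)
      also have "\<dots> < e" using z(2) da(2) by (simp add: field_simps)
      finally show "norm (G z) < e" .
    qed
  qed
  have Gsm: "smooth_on D' G"
    using smooth_on_subset[OF _ W(5)] D'img W(2) unfolding G_def by blast
  have psism: "Wb False D' \<beta> q (\<lambda>z. G z - z)" for q
    using Wb_diff[OF D'open] Gsm[unfolded smooth_iff[where m=\<beta>]] Wb_id[OF D'open] by blast
  have dpsi: "(\<lambda>z. G z - z) differentiable_on D'" using psism[of 0] by simp
  have dG: "G differentiable_on D'" using Gsm[unfolded smooth_iff[where m=\<beta>]] by (metis Wb_diff_on)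
  have psi_eq': "\<And>z. z \<in> D' \<Longrightarrow> G z - z = - \<phi> (G z)" using psi_eq by blast
  have bndpsi: "bnd D' \<beta> (\<lambda>z. G z - z)"
  proof -
    have "bnd D' \<beta> (\<lambda>z. \<phi> (G z))" by (rule bnd_comp[OF bnd0])
    then have "bnd D' \<beta> (\<lambda>z. - \<phi> (G z))" unfolding bnd_def by simp
    then show ?thesis by (rule bnd_cong[rotated]) (use psi_eq in simp)
  qed
  have ident: "pd (\<lambda>z. G z - z) i z = - pd \<phi> i (G z) + (\<Sum>j\<in>Basis. (pd (\<lambda>z. G z - z) i z \<bullet> j) *\<^sub>R - pd \<phi> j (G z))"
    if z: "z \<in> D'" for z i
  proof -
    have dGz: "G differentiable at z" using dG D'open z differentiable_on_eq_differentiable_at by blast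
    have dpsiz: "(\<lambda>z. G z - z) differentiable at z" using dpsi D'open z differentiable_on_eq_differentiable_at by blast
    have dphiG: "\<phi> differentiable at (G z)" using dphi D GP[OF z] differentiable_on_eq_differentiable_at by blast
    have hd: "((\<lambda>w. - \<phi> w) has_derivative (\<lambda>h. - frechet_derivative \<phi> (at (G z)) h)) (at (G z))"
      by (intro has_derivative_minus frechet_derivative_works[THEN iffD1, OF dphiG])
    have fd: "frechet_derivative (\<lambda>w. - \<phi> w) (at (G z)) = (\<lambda>h. - frechet_derivative \<phi> (at (G z)) h)"
      using frechet_derivative_at[OF hd] by simp
    have "pd (\<lambda>z. G z - z) i z = pd (\<lambda>z. - \<phi> (G z)) i z"
      by (rule pd_cong[OF D'open psi_eq' dpsi z])
    also have "\<dots> = frechet_derivative (\<lambda>w. - \<phi> w) (at (G z)) (pd G i z)"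
      by (rule pd_comp[OF dGz]) (use hd in \<open>rule differentiableI\<close>)
    also have "\<dots> = - frechet_derivative \<phi> (at (G z)) (i + pd (\<lambda>z. G z - z) i z)"
      unfolding fd pd_G[OF dpsiz] ..
    also have "\<dots> = - (pd \<phi> i (G z) + frechet_derivative \<phi> (at (G z)) (pd (\<lambda>z. G z - z) i z))"
      using linear_add[OF linear_frechet_derivative[OF dphiG]] by (simp add: pd_def)
    also have "\<dots> = - pd \<phi> i (G z) + (\<Sum>j\<in>Basis. (pd (\<lambda>z. G z - z) i z \<bullet> j) *\<^sub>R - pd \<phi> j (G z))"
      by (simp add: pd_expand[OF dphiG] sum_negf)
    finally show ?thesis .
  qed
  have main: "q \<le> p \<Longrightarrow> Wb True D' \<beta> q (\<lambda>z. G z - z)" for q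
  proof (induction q)
    case 0 then show ?case using dpsi bndpsi by simp
  next
    case (Suc q)
    have IH: "Wb True D' \<beta> q (\<lambda>z. G z - z)" using Suc by simp
    have qp: "q \<le> p'" using Suc.prems p' by simp
    have phiG: "Wb True D' (\<beta> - 1) q (\<lambda>z. - pd \<phi> j (G z))" if j: "j \<in> Basis" for j
    proof -
      have "Wb True D (\<beta> - 1) q (pd \<phi> j)" using Wb_mono_q[OF qp phi1[OF j]] .
      then have "Wb True D' (\<beta> - 1) q (\<lambda>z. pd \<phi> j (G z))" by (rule Wb_comp[OF IH])
      then show ?thesis by (rule Wb_uminus[OF D'open])
    qed
    show ?case
    proof (rule WbI_Suc[OF D'open dpsi])
      show "True \<Longrightarrow> bnd D' \<beta> (\<lambda>z. G z - z)" using bndpsi by simp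
      fix i :: "'n pt" assume i: "i \<in> Basis"
      have "Wb True D' (\<beta> - 1) q (pd (\<lambda>z. G z - z) i)"
      proof (rule Wb_absorb[where c = "\<lambda>j z. - pd \<phi> j (G z)", OF D'open _ zero_less_one])
        show "\<And>j. j \<in> Basis \<Longrightarrow> Wb True D' 0 q (\<lambda>z. - pd \<phi> j (G z))"
          by (rule Wb_mono_m[OF _ phiG]) (use assms(6) in auto)
        show "\<And>z. z \<in> D' \<Longrightarrow> norm z < 1 \<Longrightarrow> (\<Sum>j\<in>Basis. norm (- pd \<phi> j (G z))) \<le> 1/2"
          using estG by simp
        show "Wb True D' (\<beta> - 1) q (\<lambda>z. - pd \<phi> i (G z))" by (rule phiG[OF i])
        show "\<And>q'. Wb False D' (\<beta> - 1) q' (pd (\<lambda>z. G z - z) i)" using psism i by (metis Wb_pd)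
        show "\<And>z. z \<in> D' \<Longrightarrow> pd (\<lambda>z. G z - z) i z = - pd \<phi> i (G z) + (\<Sum>j\<in>Basis. (pd (\<lambda>z. G z - z) i z \<bullet> j) *\<^sub>R - pd \<phi> j (G z))"
          by (rule ident)
      qed
      then show "\<exists>h. (\<forall>z\<in>D'. pd (\<lambda>z. G z - z) i z = h z) \<and> Wb True D' (\<beta> - 1) q h" by blast
    qed
  qed
  have injG: "inj_on G D'" unfolding G_def by (rule inj_on_inv_into[OF D'img])
  have img: "G ` D' = D \<inter> F -` D'"
  proof (intro equalityI subsetI)
    fix w assume "w \<in> G ` D'"
    then obtain z where z: "z \<in> D'" "w = G z" by blast
    then show "w \<in> D \<inter> F -` D'" using GP[OF z(1)] by auto
  next
    fix w assume w: "w \<in> D \<inter> F -` D'"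
    then have "G (F w) = w" unfolding G_def using inv_into_f_f[OF W(3)] by blast
    then show "w \<in> G ` D'" using w by (metis IntE image_eqI vimageE)
  qed
  have contF: "continuous_on D F"
    using W(4)[unfolded smooth_iff[where m=0]] by (metis Wb_diff_on differentiable_imp_continuous_on)
  have openW': "open (G ` D')"
    unfolding img using continuous_on_open_vimage[OF D, of F] contF D'open by (simp add: Int_commute)
  have smW': "smooth_on (G ` D') (inv_into D' G)"
  proof (rule smooth_cong[OF openW' _ smooth_on_subset[OF _ W(4)]])
    show "G ` D' \<subseteq> D" using GP by blast
    fix w assume "w \<in> G ` D'"
    then obtain z where z: "z \<in> D'" "w = G z" by blast
    then show "F w = inv_into D' G w" using inv_into_f_f[OF injG z(1)] GP[OF z(1)] by simp
  qed
  have "D_class \<beta> p D' G"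
    unfolding D_class_def
  proof (intro conjI exI[of _ "G ` D'"] ballI)
    show "smooth_diffeo D' (G ` D') G"
      unfolding smooth_diffeo_def using openW' injG Gsm smW' by blast
    show "\<And>z. z \<in> D' \<Longrightarrow> fst (G z) = fst z" using GP by blast
    show "of_order D' \<beta> p (\<lambda>z. G z - z)"
      unfolding of_order_iff smooth_iff[where m=\<beta>] using psism main by blast
  qed
  then show ?thesis
    using r1'(1) r2'(1) D'img unfolding D'_def D_def G_def by blast
qed

end
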